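(* Let $\beta\ge\bar\beta$ and let $X^*\in\Omega$ satisfy $\nabla h(X^* )=0$. Then either $(X^* )^\top X^*=I_p$ and $X^*$ is a first-order stationary point of (OCP), or $\sigma_{\min}(X^* )\le\sqrt{2M_1/\beta}$.
   Context: $f:\mathbb{R}^{n\times p}\to\mathbb{R}$ ($n\ge p$) is differentiable with $f$ and $\nabla f$ locally Lipschitz. (OCP) is the problem $\min f(X)$ s.t. $X^\top X=I_p$; the feasible set is the Stiefel manifold $\mathcal{S}_{n,p}=\{X:X^\top X=I_p\}$. $\Phi(M):=\frac12(M+M^\top)$. A point $X\in\mathcal{S}_{n,p}$ is a first-order stationary point of (OCP) if $\mathrm{grad} f(X):=\nabla f(X)-X\Phi(X^\top\nabla f(X))=0$. $\mathcal{A}(X):=\frac32I_p-\frac12X^\top X$, $g(X):=f(X\mathcal{A}(X))$, $h(X):=g(X)+\frac\beta4\|X^\top X-I_p\|_F^2$ with $\beta>0$, $G(X):=\nabla f(Y)|_{Y=X\mathcal{A}(X)}$. $\sigma_{\min}$ denotes the smallest singular value. $\Omega:=\{X:\|X\|_2\le 1+\frac1{12}\}$ ($\|\cdot\|_2$ spectral norm). $M_1:=\sup_{X\in\Omega}\|G(X)\|_F$, $M_2:=\sup_{X\ne Y\in\Omega}\frac{\|\nabla g(X)-\nabla g(Y)\|_F}{\|X-Y\|_F}$, $\bar\beta:=\max\{12M_1,6M_2\}$. *)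

theory Defs
  imports "HOL-Analysis.Analysis"
begin

text \<open>Real n x p matrices are rendered as real^'p^'n (rows indexed by 'n, columns by 'p).
  The inner product on this type is the Frobenius inner product and norm is the Frobenius norm.\<close>

definition mgrad :: "(real^'p^'n \<Rightarrow> real) \<Rightarrow> real^'p^'n \<Rightarrow> real^'p^'n" where
  "mgrad F X = (THE G. (F has_derivative (\<lambda>H. G \<bullet> H)) (at X))"

definition loc_lipschitz :: "('a::metric_space \<Rightarrow> 'b::metric_space) \<Rightarrow> bool" where
  "loc_lipschitz F \<longleftrightarrow> (\<forall>x. \<exists>e>0. \<exists>L. \<forall>y\<in>ball x e. \<forall>z\<in>ball x e. dist (F y) (F z) \<le> L * dist y z)"

definition Phi :: "real^'p^'p \<Rightarrow> real^'p^'p" where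
  "Phi M = (1/2) *\<^sub>R (M + transpose M)"

definition Amap :: "real^'p^'n \<Rightarrow> real^'p^'p" where
  "Amap X = (3/2) *\<^sub>R mat 1 - (1/2) *\<^sub>R (transpose X ** X)"

definition gfun :: "(real^'p^'n \<Rightarrow> real) \<Rightarrow> real^'p^'n \<Rightarrow> real" where
  "gfun f X = f (X ** Amap X)"

definition hfun :: "(real^'p^'n \<Rightarrow> real) \<Rightarrow> real \<Rightarrow> real^'p^'n \<Rightarrow> real" where
  "hfun f \<beta> X = gfun f X + \<beta> / 4 * (norm (transpose X ** X - mat 1))\<^sup>2"

definition Gfun :: "(real^'p^'n \<Rightarrow> real) \<Rightarrow> real^'p^'n \<Rightarrow> real^'p^'n" where
  "Gfun f X = mgrad f (X ** Amap X)"

definition rgrad :: "(real^'p^'n \<Rightarrow> real) \<Rightarrow> real^'p^'n \<Rightarrow> real^'p^'n" where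
  "rgrad f X = mgrad f X - X ** Phi (transpose X ** mgrad f X)"

definition stationary :: "(real^'p^'n \<Rightarrow> real) \<Rightarrow> real^'p^'n \<Rightarrow> bool" where
  "stationary f X \<longleftrightarrow> transpose X ** X = mat 1 \<and> rgrad f X = 0"

definition spec_norm :: "real^'p^'n \<Rightarrow> real" where
  "spec_norm X = onorm (\<lambda>v. X *v v)"

definition sigma_min :: "real^'p^'n \<Rightarrow> real" where
  "sigma_min X = Inf {norm (X *v v) | v. norm v = 1}"

definition Omega :: "(real^'p^'n) set" where
  "Omega = {X. spec_norm X \<le> 1 + 1/12}"

definition M1 :: "(real^'p^'n \<Rightarrow> real) \<Rightarrow> real" where
  "M1 f = (SUP X\<in>Omega. norm (Gfun f X))"

definition M2 :: "(real^'p^'n \<Rightarrow> real) \<Rightarrow> real" where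
  "M2 f = Sup {norm (mgrad (gfun f) X - mgrad (gfun f) Y) / norm (X - Y) | X Y.
                 X \<in> Omega \<and> Y \<in> Omega \<and> X \<noteq> Y}"

definition beta_bar :: "(real^'p^'n \<Rightarrow> real) \<Rightarrow> real" where
  "beta_bar f = max (12 * M1 f) (6 * M2 f)"

end

theory Submission
  imports Defs "HOL-Analysis.Analysis"
begin


lemma mm_add_r: "((A::real^'m^'n) + B) ** (C::real^'k^'m) = A ** C + B ** C"
  by (simp add: matrix_matrix_mult_def vec_eq_iff sum.distrib distrib_right)
lemma mm_diff_l: "(A::real^'m^'n) ** ((B::real^'k^'m) - C) = A ** B - A ** C"
  by (simp add: matrix_matrix_mult_def vec_eq_iff sum_subtractf right_diff_distrib)
lemma mm_diff_r: "((A::real^'m^'n) - B) ** (C::real^'k^'m) = A ** C - B ** C"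
  by (simp add: matrix_matrix_mult_def vec_eq_iff sum_subtractf left_diff_distrib)
lemma mm_scale_l: "(c *\<^sub>R (A::real^'m^'n)) ** (C::real^'k^'m) = c *\<^sub>R (A ** C)"
  by (simp add: scalar_matrix_assoc)
lemma mm_scale_r: "(A::real^'m^'n) ** (c *\<^sub>R (C::real^'k^'m)) = c *\<^sub>R (A ** C)"
  by (simp add: matrix_scalar_ac scalar_matrix_assoc)
lemma tr_add: "transpose ((A::real^'m^'n) + B) = transpose A + transpose B"
  by (simp add: transpose_def vec_eq_iff)
lemma tr_diff: "transpose ((A::real^'m^'n) - B) = transpose A - transpose B"
  by (simp add: transpose_def vec_eq_iff)
lemma tr_scale: "transpose (c *\<^sub>R (A::real^'m^'n)) = c *\<^sub>R transpose A"
  by (simp add: transpose_scalar)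

lemmas mmsimps = matrix_add_ldistrib mm_add_r mm_diff_l mm_diff_r mm_scale_l mm_scale_r
  tr_add tr_diff tr_scale matrix_transpose_mul

lemma inner_mat: "(A::real^'m^'n) \<bullet> B = (\<Sum>i\<in>UNIV. \<Sum>j\<in>UNIV. A$i$j * B$i$j)"
  by (simp add: inner_vec_def)

lemma inner_tr: "transpose (A::real^'m^'n) \<bullet> transpose B = A \<bullet> B"
  unfolding inner_mat transpose_def by (simp add: sum.swap[of _ "UNIV::'m set"])

lemma sum3_swap: "(\<Sum>i\<in>UNIV. \<Sum>j\<in>UNIV. \<Sum>k\<in>UNIV. (F::'a::finite \<Rightarrow> 'b::finite \<Rightarrow> 'c::finite \<Rightarrow> real) i j k)
   = (\<Sum>k\<in>UNIV. \<Sum>j\<in>UNIV. \<Sum>i\<in>UNIV. F i j k)"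
proof -
  have "(\<Sum>i\<in>UNIV. \<Sum>j\<in>UNIV. \<Sum>k\<in>UNIV. F i j k) = (\<Sum>i\<in>UNIV. \<Sum>k\<in>UNIV. \<Sum>j\<in>UNIV. F i j k)"
    by (rule sum.cong[OF refl], rule sum.swap)
  also have "\<dots> = (\<Sum>k\<in>UNIV. \<Sum>i\<in>UNIV. \<Sum>j\<in>UNIV. F i j k)" by (rule sum.swap)
  also have "\<dots> = (\<Sum>k\<in>UNIV. \<Sum>j\<in>UNIV. \<Sum>i\<in>UNIV. F i j k)"
    by (rule sum.cong[OF refl], rule sum.swap)
  finally show ?thesis .
qed

lemma inner_mm: "(A::real^'k^'n) \<bullet> ((B::real^'m^'n) ** (C::real^'k^'m)) = (transpose B ** A) \<bullet> C"
proof -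
  have "A \<bullet> (B ** C) = (\<Sum>i\<in>UNIV. \<Sum>j\<in>UNIV. \<Sum>k\<in>UNIV. A$i$j * (B$i$k * C$k$j))"
    by (simp add: inner_mat matrix_matrix_mult_def sum_distrib_left)
  also have "\<dots> = (\<Sum>k\<in>UNIV. \<Sum>j\<in>UNIV. \<Sum>i\<in>UNIV. A$i$j * (B$i$k * C$k$j))"
    by (rule sum3_swap)
  also have "\<dots> = (transpose B ** A) \<bullet> C"
    by (simp add: inner_mat matrix_matrix_mult_def transpose_def sum_distrib_left mult_ac)
  finally show ?thesis .
qed

lemma inner_mm2: "(A::real^'k^'n) \<bullet> ((B::real^'m^'n) ** (C::real^'k^'m)) = (A ** transpose C) \<bullet> B"
proof -
  have "A \<bullet> (B ** C) = transpose A \<bullet> (transpose C ** transpose B)"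
    by (metis inner_tr matrix_transpose_mul)
  also have "\<dots> = (C ** transpose A) \<bullet> transpose B" by (simp add: inner_mm)
  also have "\<dots> = (A ** transpose C) \<bullet> B"
    by (metis inner_tr matrix_transpose_mul transpose_transpose)
  finally show ?thesis .
qed

lemma bb_mm: "bounded_bilinear (\<lambda>(A::real^'m^'n) (B::real^'k^'m). A ** B)"
  unfolding bilinear_conv_bounded_bilinear[symmetric] bilinear_def linear_iff
  by (simp add: mmsimps)

lemma bl_tr: "bounded_linear (transpose :: real^'m^'n \<Rightarrow> real^'n^'m)"
  unfolding linear_conv_bounded_linear[symmetric] linear_iff
  by (simp add: mmsimps)

lemma norm_mat_sq: "(norm (A::real^'m^'n))\<^sup>2 = (\<Sum>i\<in>UNIV. (norm (A$i))\<^sup>2)"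
  by (simp add: power2_norm_eq_inner inner_vec_def)

lemma row_mm_tr: "((T::real^'m^'k) ** transpose (X::real^'m^'n)) $ j = X *v (T$j)"
  by (simp add: matrix_matrix_mult_def matrix_vector_mult_def transpose_def vec_eq_iff mult.commute)

lemma norm_mv: "norm ((A::real^'m^'n) *v w) \<le> norm A * norm w"
proof -
  have "(norm (A *v w))\<^sup>2 = (\<Sum>i\<in>UNIV. (A$i \<bullet> w)\<^sup>2)"
    by (simp only: power2_norm_eq_inner) (simp add: inner_vec_def matrix_vector_mul_component power2_eq_square)
  also have "\<dots> \<le> (\<Sum>i\<in>UNIV. (norm (A$i))\<^sup>2 * (norm w)\<^sup>2)"
    apply (rule sum_mono)
    by (metis Cauchy_Schwarz_ineq power2_norm_eq_inner)
  also have "\<dots> = (norm A * norm w)\<^sup>2"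
    by (simp add: norm_mat_sq power_mult_distrib sum_distrib_right)
  finally show ?thesis
    by (meson mult_nonneg_nonneg norm_ge_zero power2_le_imp_le)
qed



lemma mgrad_eq:
  fixes F :: "real^'p^'n \<Rightarrow> real"
  assumes d: "(F has_derivative D) (at X)"
  shows "D = (\<lambda>H. mgrad F X \<bullet> H)"
proof -
  have lin: "linear D" using d has_derivative_linear by blast
  define G0 where "G0 = (\<Sum>b\<in>Basis. D b *\<^sub>R b)"
  have rep: "D H = G0 \<bullet> H" for H
  proof -
    have "D H = D (\<Sum>b\<in>Basis. (H \<bullet> b) *\<^sub>R b)" by (simp add: euclidean_representation)
    also have "\<dots> = (\<Sum>b\<in>Basis. (H \<bullet> b) * D b)"
      by (simp add: linear_sum[OF lin] linear_scale[OF lin])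
    also have "\<dots> = (\<Sum>b\<in>Basis. D b * (b \<bullet> H))"
      by (rule sum.cong) (auto simp: inner_commute)
    also have "\<dots> = G0 \<bullet> H" by (simp add: G0_def inner_sum_left)
    finally show ?thesis .
  qed
  have D': "D = (\<lambda>H. G0 \<bullet> H)" using rep by auto
  have "mgrad F X = G0"
    unfolding mgrad_def
  proof (rule the_equality)
    show "(F has_derivative (\<bullet>) G0) (at X)" using d D' by simp
  next
    fix G assume "(F has_derivative (\<bullet>) G) (at X)"
    then have "(\<lambda>H. G \<bullet> H) = (\<lambda>H. G0 \<bullet> H)" using d D' has_derivative_unique by metis
    then have "G \<bullet> (G - G0) = G0 \<bullet> (G - G0)" by metis
    then have "(G - G0) \<bullet> (G - G0) = 0" by (simp add: inner_diff_left)
    then show "G = G0" by simp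
  qed
  then show ?thesis using D' by simp
qed

lemma dT: "(transpose has_derivative transpose) (at (X::real^'p^'n))"
  by (rule bounded_linear_imp_has_derivative[OF bl_tr])

lemma dS: "((\<lambda>X::real^'p^'n. transpose X ** X) has_derivative (\<lambda>H. transpose X ** H + transpose H ** X)) (at X)"
  using bounded_bilinear.FDERIV[OF bb_mm dT[of X] has_derivative_ident] by simp

lemma dA: "(Amap has_derivative (\<lambda>H. (-1/2) *\<^sub>R (transpose X ** H + transpose H ** X))) (at (X::real^'p^'n))"
  unfolding Amap_def[abs_def]
  apply (rule has_derivative_eq_rhs)
   apply (rule has_derivative_diff[OF has_derivative_const has_derivative_scaleR_right[OF dS]])
  by (simp add: fun_eq_iff)

lemma dY: "((\<lambda>X::real^'p^'n. X ** Amap X) has_derivative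
   (\<lambda>H. X ** ((-1/2) *\<^sub>R (transpose X ** H + transpose H ** X)) + H ** Amap X)) (at X)"
  using bounded_bilinear.FDERIV[OF bb_mm has_derivative_ident dA[of X]] by simp

lemma dh:
  fixes f :: "real^'p^'n \<Rightarrow> real"
  assumes diff: "\<And>X. f differentiable (at X)"
  shows "(hfun f \<beta> has_derivative
    (\<lambda>H. Gfun f X \<bullet> (X ** ((-1/2) *\<^sub>R (transpose X ** H + transpose H ** X)) + H ** Amap X)
       + \<beta> / 4 * ((transpose X ** X - mat 1) \<bullet> (transpose X ** H + transpose H ** X)
           + (transpose X ** H + transpose H ** X) \<bullet> (transpose X ** X - mat 1)))) (at X)"
proof -
  let ?Y = "X ** Amap X"
  obtain D where D: "(f has_derivative D) (at ?Y)" using diff unfolding differentiable_def by blast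
  then have Df: "(f has_derivative (\<lambda>H. Gfun f X \<bullet> H)) (at ?Y)"
    using mgrad_eq[OF D] unfolding Gfun_def by simp
  have dg: "(gfun f has_derivative (\<lambda>H. Gfun f X \<bullet> (X ** ((-1/2) *\<^sub>R (transpose X ** H + transpose H ** X)) + H ** Amap X))) (at X)"
    using diff_chain_at[OF dY Df] unfolding gfun_def[abs_def] by (simp add: o_def)
  have dM: "((\<lambda>X::real^'p^'n. transpose X ** X - mat 1) has_derivative (\<lambda>H. transpose X ** H + transpose H ** X)) (at X)"
    using has_derivative_diff[OF dS has_derivative_const] by simp
  have dN: "((\<lambda>X::real^'p^'n. (norm (transpose X ** X - mat 1))\<^sup>2) has_derivative
     (\<lambda>H. (transpose X ** X - mat 1) \<bullet> (transpose X ** H + transpose H ** X)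
           + (transpose X ** H + transpose H ** X) \<bullet> (transpose X ** X - mat 1))) (at X)"
    unfolding power2_norm_eq_inner by (rule has_derivative_inner[OF dM dM])
  show ?thesis
    unfolding hfun_def[abs_def]
    by (rule has_derivative_add[OF dg has_derivative_mult_right[OF dN]])
qed



lemma sig_set_ne: "{norm ((X::real^'p^'n) *v v) | v. norm v = 1} \<noteq> {}"
  using norm_axis_1 by blast

lemma sig_bdd: "bdd_below {norm ((X::real^'p^'n) *v v) | v. norm v = 1}"
  by (rule bdd_belowI[of _ 0]) auto

lemma sig_nonneg: "0 \<le> sigma_min (X::real^'p^'n)"
  unfolding sigma_min_def by (rule cInf_greatest[OF sig_set_ne]) auto

lemma sig_le: "norm v = 1 \<Longrightarrow> sigma_min (X::real^'p^'n) \<le> norm (X *v v)"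
  unfolding sigma_min_def by (rule cInf_lower[OF _ sig_bdd]) auto

lemma sig_mul: "sigma_min (X::real^'p^'n) * norm w \<le> norm (X *v w)"
proof (cases "w = 0")
  case True then show ?thesis by simp
next
  case False
  then have n: "norm w > 0" by simp
  have "norm ((1 / norm w) *\<^sub>R w) = 1" using n by simp
  then have "sigma_min X \<le> norm (X *v ((1 / norm w) *\<^sub>R w))" by (rule sig_le)
  also have "\<dots> = norm (X *v w) / norm w" using n
    by (simp add: matrix_vector_mult_scaleR)
  finally show ?thesis using n by (simp add: pos_le_divide_eq)
qed

lemma norm_tr: "norm (transpose (A::real^'m^'n)) = norm A"
  by (simp add: norm_eq_sqrt_inner inner_tr)

lemma norm_sig_mat: "sigma_min (X::real^'p^'n) * norm (T::real^'k^'p) \<le> norm (X ** T)"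
proof -
  have "(sigma_min X * norm T)\<^sup>2 = (sigma_min X)\<^sup>2 * (\<Sum>j\<in>UNIV. (norm (transpose T $ j))\<^sup>2)"
    by (simp add: power_mult_distrib norm_mat_sq[symmetric] norm_tr)
  also have "\<dots> = (\<Sum>j\<in>UNIV. (sigma_min X * norm (transpose T $ j))\<^sup>2)"
    by (simp add: sum_distrib_left power_mult_distrib)
  also have "\<dots> \<le> (\<Sum>j\<in>UNIV. (norm (X *v (transpose T $ j)))\<^sup>2)"
    apply (rule sum_mono) apply (rule power_mono[OF sig_mul])
    by (intro mult_nonneg_nonneg sig_nonneg norm_ge_zero)
  also have "\<dots> = (norm (transpose T ** transpose X))\<^sup>2"
    by (simp add: norm_mat_sq row_mm_tr)
  also have "\<dots> = (norm (X ** T))\<^sup>2"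
    by (metis matrix_transpose_mul norm_tr)
  finally show ?thesis
    by (meson norm_ge_zero power2_le_imp_le)
qed

lemma norm_mm_le: "norm ((G::real^'p^'n) ** (T::real^'k^'p)) \<le> norm G * norm T"
proof -
  have "(norm (G ** T))\<^sup>2 = (norm (transpose T ** transpose G))\<^sup>2"
    by (metis matrix_transpose_mul norm_tr)
  also have "\<dots> = (\<Sum>j\<in>UNIV. (norm (G *v (transpose T $ j)))\<^sup>2)"
    by (simp add: norm_mat_sq row_mm_tr)
  also have "\<dots> \<le> (\<Sum>j\<in>UNIV. (norm G * norm (transpose T $ j))\<^sup>2)"
    apply (rule sum_mono) apply (rule power_mono[OF norm_mv]) by simp
  also have "\<dots> = (norm G * norm T)\<^sup>2"
    by (simp add: power_mult_distrib sum_distrib_left[symmetric] norm_mat_sq[symmetric] norm_tr)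
  finally show ?thesis
    by (meson mult_nonneg_nonneg norm_ge_zero power2_le_imp_le)
qed

lemma loc_lip_cont:
  assumes "loc_lipschitz (F::'a::metric_space \<Rightarrow> 'b::metric_space)"
  shows "continuous_on UNIV F"
proof -
  have "isCont F x" for x
  proof -
    obtain e L where e: "e > 0" and L: "\<forall>y\<in>ball x e. \<forall>z\<in>ball x e. dist (F y) (F z) \<le> L * dist y z"
      using assms unfolding loc_lipschitz_def by blast
    show ?thesis unfolding continuous_at_eps_delta
    proof (intro allI impI)
      fix \<epsilon> :: real assume ep: "\<epsilon> > 0"
      define d where "d = min e (\<epsilon> / (\<bar>L\<bar> + 1))"
      have d: "d > 0" using e ep by (simp add: d_def)
      have "dist (F y) (F x) < \<epsilon>" if "dist y x < d" for y
      proof -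
        have yb: "y \<in> ball x e" using that by (simp add: d_def dist_commute)
        have "dist (F y) (F x) \<le> L * dist y x" using L yb e by simp
        also have "\<dots> \<le> \<bar>L\<bar> * dist y x" by (simp add: mult_right_mono)
        also have "\<dots> \<le> \<bar>L\<bar> * d" using that by (simp add: mult_left_mono)
        also have "\<dots> \<le> \<bar>L\<bar> * (\<epsilon> / (\<bar>L\<bar> + 1))" by (rule mult_left_mono) (auto simp: d_def)
        also have "\<dots> < \<epsilon>" using ep by (simp add: field_simps)
        finally show ?thesis .
      qed
      then show "\<exists>d>0. \<forall>y. dist y x < d \<longrightarrow> dist (F y) (F x) < \<epsilon>" using d by blast
    qed
  qed
  then show ?thesis by (simp add: continuous_at_imp_continuous_on)
qed

lemma Omega_bounded:
  assumes "(X::real^'p^'n) \<in> Omega"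
  shows "norm X \<le> (\<Sum>i\<in>(UNIV::'n set). \<Sum>j\<in>(UNIV::'p set). 13/12)"
proof -
  have c: "\<bar>X$i$j\<bar> \<le> 13/12" for i j
    using matrix_component_le_onorm[of X i j] assms by (simp add: Omega_def spec_norm_def)
  have "norm X \<le> (\<Sum>i\<in>UNIV. norm (X$i))"
    unfolding norm_vec_def by (rule L2_set_le_sum) simp
  also have "\<dots> \<le> (\<Sum>i\<in>UNIV. \<Sum>j\<in>UNIV. \<bar>X$i$j\<bar>)"
    by (rule sum_mono) (rule norm_le_l1_cart)
  also have "\<dots> \<le> (\<Sum>i\<in>(UNIV::'n set). \<Sum>j\<in>(UNIV::'p set). 13/12)"
    by (intro sum_mono c)
  finally show ?thesis .
qed

lemma M1_bound:
  fixes f :: "real^'p^'n \<Rightarrow> real"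
  assumes diff: "\<And>X. f differentiable (at X)" and lipg: "loc_lipschitz (mgrad f)"
    and XO: "X \<in> Omega"
  shows "norm (Gfun f X) \<le> M1 f"
proof -
  define R where "R = (\<Sum>i\<in>(UNIV::'n set). \<Sum>j\<in>(UNIV::'p set). (13::real)/12)"
  have sub: "Omega \<subseteq> cball (0::real^'p^'n) R"
  proof
    fix X :: "real^'p^'n" assume "X \<in> Omega"
    then have "norm X \<le> R" unfolding R_def by (rule Omega_bounded)
    then show "X \<in> cball 0 R" by (simp add: dist_norm)
  qed
  have cY: "continuous_on UNIV (\<lambda>X::real^'p^'n. X ** Amap X)"
    by (rule continuous_at_imp_continuous_on) (blast intro: has_derivative_continuous[OF dY])
  have eqG: "Gfun f = mgrad f \<circ> (\<lambda>X. X ** Amap X)" by (simp add: fun_eq_iff Gfun_def)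
  have cG: "continuous_on UNIV (Gfun f)"
    unfolding eqG
    by (rule continuous_on_compose[OF cY continuous_on_subset[OF loc_lip_cont[OF lipg]]]) simp
  have "compact (Gfun f ` cball 0 R)"
    by (rule compact_continuous_image[OF continuous_on_subset[OF cG] compact_cball]) simp
  then obtain B where B: "\<forall>y\<in>Gfun f ` cball 0 R. norm y \<le> B"
    using compact_imp_bounded[of "Gfun f ` cball 0 R"] Elementary_Metric_Spaces.bounded_iff by blast
  have "bdd_above ((\<lambda>X. norm (Gfun f X)) ` Omega)"
  proof (rule bdd_aboveI[of _ B])
    fix y assume "y \<in> (\<lambda>X. norm (Gfun f X)) ` Omega"
    then obtain Z where "Z \<in> Omega" "y = norm (Gfun f Z)" by blast
    then show "y \<le> B" using B sub by blast
  qed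
  then show ?thesis unfolding M1_def by (rule cSUP_upper[OF XO])
qed



lemma mm_neg_r: "(A::real^'m^'n) ** (- (B::real^'k^'m)) = - (A ** B)"
  by (simp add: matrix_matrix_mult_def vec_eq_iff sum_negf)

theorem mainTheorem7:
  fixes f :: "real^'p^'n \<Rightarrow> real" and \<beta> :: real and Xs :: "real^'p^'n"
  assumes np: "CARD('p) \<le> CARD('n)"
    and diff: "\<And>X. f differentiable (at X)"
    and lipf: "loc_lipschitz f"
    and lipg: "loc_lipschitz (mgrad f)"
    and bpos: "\<beta> > 0"
    and bge: "\<beta> \<ge> beta_bar f"
    and XO: "Xs \<in> Omega"
    and crit: "mgrad (hfun f \<beta>) Xs = 0"
  shows "(transpose Xs ** Xs = mat 1 \<and> stationary f Xs) \<or> sigma_min Xs \<le> sqrt (2 * M1 f / \<beta>)"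
proof -
  define S where "S = transpose Xs ** Xs"
  define T where "T = S - mat 1"
  define G where "G = Gfun f Xs"
  define D where "D = (\<lambda>H. G \<bullet> (Xs ** ((-1/2) *\<^sub>R (transpose Xs ** H + transpose H ** Xs)) + H ** Amap Xs)
       + \<beta> / 4 * (T \<bullet> (transpose Xs ** H + transpose H ** Xs)
           + (transpose Xs ** H + transpose H ** Xs) \<bullet> T))"
  have dhX: "(hfun f \<beta> has_derivative D) (at Xs)"
    using dh[OF diff, of \<beta> Xs] unfolding D_def G_def T_def S_def .
  have D0: "D H = 0" for H
    using mgrad_eq[OF dhX] crit by (metis inner_zero_left)
  have AS: "Amap Xs = (3/2) *\<^sub>R mat 1 - (1/2) *\<^sub>R S" by (simp add: Amap_def S_def)
  have trS: "transpose S = S" by (simp add: S_def matrix_transpose_mul)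
  have trT: "transpose T = T" by (simp add: T_def tr_diff trS)
  have M1b: "norm G \<le> M1 f" using M1_bound[OF diff lipg XO] G_def by simp
  have M1nn: "0 \<le> M1 f" using M1b norm_ge_zero order_trans by blast
  have b12: "12 * M1 f \<le> \<beta>" using bge by (simp add: beta_bar_def)
  show ?thesis
  proof (cases "T = 0")
    case True
    then have S1: "S = mat 1" by (simp add: T_def)
    have A1: "Amap Xs = mat 1" using AS S1 by (simp add: scaleR_diff_left[symmetric])
    have GG: "G = mgrad f Xs" by (simp add: G_def Gfun_def A1)
    define P where "P = transpose Xs ** G"
    define R where "R = rgrad f Xs"
    have R_eq: "R = G - (1/2) *\<^sub>R (Xs ** P) - (1/2) *\<^sub>R (Xs ** transpose P)"
      by (simp add: R_def rgrad_def Phi_def GG P_def mmsimps algebra_simps)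
    have e1: "G \<bullet> (Xs ** (transpose Xs ** H)) = (Xs ** P) \<bullet> H" for H
      by (simp add: inner_mm P_def)
    have e2: "G \<bullet> (Xs ** (transpose H ** Xs)) = (Xs ** transpose P) \<bullet> H" for H
    proof -
      have "G \<bullet> (Xs ** (transpose H ** Xs)) = P \<bullet> (transpose H ** Xs)" unfolding P_def by (rule inner_mm)
      also have "\<dots> = (P ** transpose Xs) \<bullet> transpose H" by (rule inner_mm2)
      also have "\<dots> = transpose (P ** transpose Xs) \<bullet> H" by (metis inner_tr transpose_transpose)
      also have "\<dots> = (Xs ** transpose P) \<bullet> H" by (simp add: matrix_transpose_mul)
      finally show ?thesis .
    qed
    have DR: "D H = R \<bullet> H" for H
    proof -
      have "D H = G \<bullet> H - (1/2) * (G \<bullet> (Xs ** (transpose Xs ** H))) - (1/2) * (G \<bullet> (Xs ** (transpose H ** Xs)))"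
        by (simp add: D_def True A1 mmsimps mm_neg_r inner_add_right inner_diff_right algebra_simps)
      also have "\<dots> = R \<bullet> H" by (simp add: e1 e2 R_eq inner_diff_left)
      finally show ?thesis .
    qed
    have "R \<bullet> R = 0" using D0[of R] DR[of R] by simp
    then have "R = 0" by simp
    then show ?thesis using S1 by (simp add: stationary_def S_def R_def)
  next
    case False
    define H where "H = Xs ** T"
    have trH: "transpose H = T ** transpose Xs" by (simp add: H_def matrix_transpose_mul trT)
    have dSH: "transpose Xs ** H + transpose H ** Xs = S ** T + T ** S"
      unfolding trH by (simp add: H_def S_def matrix_mul_assoc)
    have ST: "S ** T = S ** S - S" by (simp add: T_def mm_diff_l)
    have TS: "T ** S = S ** S - S" by (simp add: T_def mm_diff_r)
    have comm: "T ** S = S ** T" using ST TS by simp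
    have inner1: "(-1/2) *\<^sub>R (S ** T + T ** S) + T ** Amap Xs = (-3/2) *\<^sub>R (T ** T)"
    proof -
      have TA: "T ** Amap Xs = (3/2) *\<^sub>R S - (1/2) *\<^sub>R (S ** S) - (3/2) *\<^sub>R mat 1 + (1/2) *\<^sub>R S"
        by (simp add: T_def AS mm_diff_l mm_diff_r mm_scale_r vec_eq_iff algebra_simps)
      have TT: "T ** T = S ** S - S - S + mat 1"
        by (simp add: T_def mm_diff_l mm_diff_r vec_eq_iff algebra_simps)
      show ?thesis unfolding ST TS TA TT by (simp add: vec_eq_iff algebra_simps)
    qed
    have key1: "Xs ** ((-1/2) *\<^sub>R (S ** T + T ** S)) + H ** Amap Xs = (-3/2) *\<^sub>R (H ** T)"
    proof -
      have "Xs ** ((-1/2) *\<^sub>R (S ** T + T ** S)) + H ** Amap Xs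
          = Xs ** ((-1/2) *\<^sub>R (S ** T + T ** S) + T ** Amap Xs)"
        by (simp add: H_def matrix_add_ldistrib mm_diff_l mm_neg_r matrix_mul_assoc algebra_simps)
      also have "\<dots> = Xs ** ((-3/2) *\<^sub>R (T ** T))" by (simp only: inner1)
      also have "\<dots> = (-3/2) *\<^sub>R (H ** T)" by (simp only: H_def mm_scale_r matrix_mul_assoc)
      finally show ?thesis .
    qed
    have key2: "T \<bullet> (S ** T) = H \<bullet> H"
    proof -
      have "T \<bullet> (S ** T) = T \<bullet> (transpose Xs ** H)" by (simp add: S_def H_def matrix_mul_assoc)
      also have "\<dots> = H \<bullet> H" by (simp add: inner_mm H_def)
      finally show ?thesis .
    qed
    have key3: "G \<bullet> (H ** T) = (G ** T) \<bullet> H" by (simp add: inner_mm2 trT)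
    have "0 = D H" using D0 by simp
    also have "\<dots> = G \<bullet> (Xs ** ((-1/2) *\<^sub>R (S ** T + T ** S)) + H ** Amap Xs)
       + \<beta> / 4 * (T \<bullet> (S ** T + T ** S) + (S ** T + T ** S) \<bullet> T)"
      unfolding D_def by (simp only: dSH)
    also have "\<dots> = G \<bullet> ((-3/2) *\<^sub>R (H ** T)) + \<beta> / 4 * (4 * (T \<bullet> (S ** T)))"
    proof -
      have i1: "T \<bullet> (S ** T + T ** S) + (S ** T + T ** S) \<bullet> T = 4 * (T \<bullet> (S ** T))"
        unfolding comm inner_add_left inner_add_right inner_commute[of "S ** T" T] by simp
      show ?thesis by (simp only: key1 i1)
    qed
    also have "\<dots> = (-3/2) * ((G ** T) \<bullet> H) + \<beta> * (H \<bullet> H)"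
      by (simp add: key2 key3)
    finally have eq: "\<beta> * (H \<bullet> H) = (3/2) * ((G ** T) \<bullet> H)" by simp
    have CS: "(G ** T) \<bullet> H \<le> norm (G ** T) * norm H" by (rule norm_cauchy_schwarz)
    have bH: "\<beta> * norm H \<le> (3/2) * norm (G ** T)"
    proof (cases "norm H = 0")
      case True then show ?thesis using bpos by simp
    next
      case False
      then have hp: "norm H > 0" by simp
      have "(\<beta> * norm H) * norm H = \<beta> * (H \<bullet> H)" by (simp add: power2_norm_eq_inner[symmetric] power2_eq_square)
      also have "\<dots> = (3/2) * ((G ** T) \<bullet> H)" by (rule eq)
      also have "\<dots> \<le> ((3/2) * norm (G ** T)) * norm H" using CS by simp
      finally show ?thesis using hp by (rule mult_right_le_imp_le)
    qed
    have GT: "norm (G ** T) \<le> M1 f * norm T"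
      using norm_mm_le[of G T] M1b by (meson mult_right_mono norm_ge_zero order_trans)
    have sH: "sigma_min Xs * norm T \<le> norm H" unfolding H_def by (rule norm_sig_mat)
    have nT: "norm T > 0" using False by simp
    have "(\<beta> * sigma_min Xs) * norm T = \<beta> * (sigma_min Xs * norm T)" by simp
    also have "\<dots> \<le> \<beta> * norm H" using sH bpos by (simp add: mult_left_mono)
    also have "\<dots> \<le> (3/2) * norm (G ** T)" by (rule bH)
    also have "\<dots> \<le> (3/2) * (M1 f * norm T)" using GT by simp
    also have "\<dots> = ((3/2) * M1 f) * norm T" by simp
    finally have "(\<beta> * sigma_min Xs) * norm T \<le> ((3/2) * M1 f) * norm T" .
    then have bs: "\<beta> * sigma_min Xs \<le> (3/2) * M1 f" using nT by (rule mult_right_le_imp_le)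
    define a where "a = (3/2) * M1 f / \<beta>"
    have sa: "sigma_min Xs \<le> a" using bs bpos by (simp add: a_def pos_le_divide_eq mult_ac)
    have a0: "0 \<le> a" using M1nn bpos by (simp add: a_def)
    have a8: "a \<le> 4/3" using b12 bpos M1nn by (simp add: a_def pos_divide_le_eq)
    have "(sigma_min Xs)\<^sup>2 \<le> a * a"
      unfolding power2_eq_square using mult_mono[OF sa sa a0 sig_nonneg[of Xs]] .
    also have "\<dots> \<le> 2 * M1 f / \<beta>"
    proof -
      have "a * a \<le> a * (4/3)" by (rule mult_left_mono[OF a8 a0])
      also have "\<dots> = 2 * M1 f / \<beta>" by (simp add: a_def)
      finally show ?thesis .
    qed
    finally show ?thesis by (simp add: real_le_rsqrt)
  qed
qed


end
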